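(* Let $\psi\in\mathcal W^-$, let $Y$ be a measurable space with finite measures $\mu_k$ ($k\in\mathbb N$) and $\mu$, and let $f_k,f$ be bounded functions on $Y$ that are $\mu_k$-measurable and $\mu$-measurable respectively. If $\int_Y\psi(cf_k)\,d\mu_k\to\int_Y\psi(cf)\,d\mu$ for every $c\in[0,\infty)$, then $\|f_k\|_{\psi,\mu_k}\to\|f\|_{\psi,\mu}$.
   Context: $\mathcal W^-$: functions $\psi:[-\infty,\infty]\to[0,\infty]$, even, continuous on $\mathbb R$, $\psi(0)=0$, $\psi(\pm\infty)=\infty$, smooth, concave, strictly increasing on $(0,\infty)$. For a finite measure $\nu$ and measurable $g$, the weak quasi-norm is $\|g\|_{\psi,\nu}=\inf\{N>0:\int_Y\psi(g/N)\,d\nu\le1\}$. *)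

theory Defs
  imports "HOL-Analysis.Analysis"
begin

definition smooth_on_real :: "real set \<Rightarrow> (real \<Rightarrow> real) \<Rightarrow> bool" where
  "smooth_on_real S f \<longleftrightarrow>
     (\<exists>D :: nat \<Rightarrow> real \<Rightarrow> real. D 0 = f \<and>
        (\<forall>n. \<forall>x\<in>S. (D n has_real_derivative D (Suc n) x) (at x)))"

text \<open>The class W^- (restricted to the real line; the convention
  psi(+-infinity) = infinity plays no role for real-valued arguments).\<close>
definition W_minus :: "(real \<Rightarrow> real) \<Rightarrow> bool" where
  "W_minus \<psi> \<longleftrightarrow>
     (\<forall>x. \<psi> x \<ge> 0) \<and>
     (\<forall>x. \<psi> (- x) = \<psi> x) \<and>
     continuous_on UNIV \<psi> \<and>
     \<psi> 0 = 0 \<and>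
     smooth_on_real {0<..} \<psi> \<and>
     concave_on {0<..} \<psi> \<and>
     strict_mono_on {0<..} \<psi>"

text \<open>Weak quasi-norm: inf {N > 0 . integral psi(g/N) d nu <= 1}, taken in the
  extended reals (inf of the empty set = infinity).\<close>
definition weak_qnorm :: "(real \<Rightarrow> real) \<Rightarrow> 'a measure \<Rightarrow> ('a \<Rightarrow> real) \<Rightarrow> ereal" where
  "weak_qnorm \<psi> \<nu> g =
     Inf {ereal N | N. N > 0 \<and> (\<integral>\<^sup>+ y. ennreal (\<psi> (g y / N)) \<partial>\<nu>) \<le> 1}"

end

theory Submission
  imports Defs
begin

lemma abstract_conv:
  fixes Fk :: "nat \<Rightarrow> real \<Rightarrow> real" and F :: "real \<Rightarrow> real"
  assumes lim: "\<And>N. N > 0 \<Longrightarrow> (\<lambda>k. Fk k N) \<longlonglongrightarrow> F N"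
    and anti: "\<And>k M N. 0 < M \<Longrightarrow> M \<le> N \<Longrightarrow> Fk k N \<le> Fk k M"
    and strict: "\<And>M N. 0 < M \<Longrightarrow> M < N \<Longrightarrow> F M \<le> 1 \<Longrightarrow> F N < 1"
  shows "(\<lambda>k. Inf {ereal N | N. N > 0 \<and> Fk k N \<le> 1}) \<longlonglongrightarrow> Inf {ereal N | N. N > 0 \<and> F N \<le> 1}"
proof (rule order_tendstoI)
  let ?Q = "Inf {ereal N | N. N > 0 \<and> F N \<le> 1}"
  let ?Qk = "\<lambda>k. Inf {ereal N | N. N > 0 \<and> Fk k N \<le> 1}"
  have Qk0: "0 \<le> ?Qk k" for k
    by (rule Inf_greatest) auto
  have Q0: "0 \<le> ?Q"
    by (rule Inf_greatest) auto
  fix a assume a: "a < ?Q"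
  show "\<forall>\<^sub>F k in sequentially. a < ?Qk k"
  proof (cases "a < 0")
    case True
    have "a < ?Qk k" for k using True Qk0[of k] by (meson less_le_trans zero_ereal_def)
    then show ?thesis by simp
  next
    case False
    then obtain N :: real where N: "a < ereal N" "ereal N < ?Q"
      using ereal_dense2[OF a] by blast
    have Npos: "N > 0" using N False by (cases a) auto
    have "\<not> F N \<le> 1"
    proof
      assume "F N \<le> 1"
      then have "?Q \<le> ereal N" using Npos by (intro Inf_lower) auto
      then show False using N by simp
    qed
    then have "\<forall>\<^sub>F k in sequentially. 1 < Fk k N"
      using lim[OF Npos] by (intro order_tendstoD(1)) auto
    then show ?thesis
    proof eventually_elim
      case (elim k)
      have "ereal N \<le> ?Qk k"
      proof (rule Inf_greatest)
        fix x assume "x \<in> {ereal N | N. N > 0 \<and> Fk k N \<le> 1}"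
        then obtain M where M: "x = ereal M" "M > 0" "Fk k M \<le> 1" by blast
        have "\<not> M \<le> N"
        proof
          assume "M \<le> N"
          then have "Fk k N \<le> Fk k M" using anti M by blast
          then show False using elim M by simp
        qed
        then show "ereal N \<le> x" using M by simp
      qed
      then show ?case using N by simp
    qed
  qed
next
  let ?Q = "Inf {ereal N | N. N > 0 \<and> F N \<le> 1}"
  let ?Qk = "\<lambda>k. Inf {ereal N | N. N > 0 \<and> Fk k N \<le> 1}"
  fix b assume b: "?Q < b"
  then obtain y where y: "y \<in> {ereal N | N. N > 0 \<and> F N \<le> 1}" "y < b"
    using Inf_less_iff by blast
  then obtain M where M: "y = ereal M" "M > 0" "F M \<le> 1" by blast
  obtain N :: real where N: "ereal M < ereal N" "ereal N < b"
    using ereal_dense2[of "ereal M" b] y M by blast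
  have MN: "M < N" using N by simp
  have "F N < 1" using strict[OF M(2) MN M(3)] .
  then have "\<forall>\<^sub>F k in sequentially. Fk k N < 1"
    using lim[of N] M MN by (intro order_tendstoD(2)) auto
  then show "\<forall>\<^sub>F k in sequentially. ?Qk k < b"
  proof eventually_elim
    case (elim k)
    have "?Qk k \<le> ereal N" using elim M MN by (intro Inf_lower) auto
    then show ?case using N by (meson le_less_trans)
  qed
qed

lemma psi_props:
  assumes "W_minus \<psi>"
  shows "\<And>x. \<psi> x \<ge> 0" "\<And>x. \<psi> x = \<psi> \<bar>x\<bar>" "continuous_on UNIV \<psi>" "\<psi> 0 = 0"
    "\<And>x y. 0 \<le> x \<Longrightarrow> x < y \<Longrightarrow> \<psi> x < \<psi> y"
    "\<And>x y. 0 \<le> x \<Longrightarrow> x \<le> y \<Longrightarrow> \<psi> x \<le> \<psi> y"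
proof -
  have sm: "strict_mono_on {0<..} \<psi>" and nn: "\<And>x. \<psi> x \<ge> 0" and z: "\<psi> 0 = 0"
    and ev: "\<And>x. \<psi> (- x) = \<psi> x"
    using assms unfolding W_minus_def by auto
  show "\<And>x. \<psi> x \<ge> 0" "\<psi> 0 = 0" by fact+
  show "continuous_on UNIV \<psi>" using assms unfolding W_minus_def by auto
  show "\<psi> x = \<psi> \<bar>x\<bar>" for x using ev[of x] by (cases "x \<ge> 0") auto
  show st: "\<psi> x < \<psi> y" if "0 \<le> x" "x < y" for x y
  proof (cases "x = 0")
    case True
    have "\<psi> (y/2) < \<psi> y" using sm that by (intro strict_mono_onD[OF sm]) auto
    then show ?thesis using True z nn[of "y/2"] by simp
  next
    case False
    then show ?thesis using that by (intro strict_mono_onD[OF sm]) auto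
  qed
  show "\<psi> x \<le> \<psi> y" if "0 \<le> x" "x \<le> y" for x y
    using st[of x y] that by (cases "x = y") auto
qed

lemma psi_integrable:
  assumes psi: "W_minus \<psi>" and fm: "finite_measure M" and g: "g \<in> borel_measurable M"
    and B: "\<And>y. \<bar>g y\<bar> \<le> B"
  shows "integrable M (\<lambda>y. \<psi> (c * g y))"
proof -
  interpret finite_measure M by fact
  note P = psi_props[OF psi]
  have meas: "(\<lambda>y. \<psi> (c * g y)) \<in> borel_measurable M"
    using borel_measurable_continuous_onI[OF P(3)] g
    by (intro measurable_compose[where f="\<lambda>y. c * g y" and g=\<psi>]) auto
  show ?thesis
  proof (rule integrable_const_bound[where B="\<psi> (\<bar>c\<bar> * B)"])
    show "AE x in M. norm (\<psi> (c * g x)) \<le> \<psi> (\<bar>c\<bar> * B)"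
    proof (rule AE_I2)
      fix x
      have "\<psi> (c * g x) = \<psi> \<bar>c * g x\<bar>" by (rule P(2))
      also have "\<dots> \<le> \<psi> (\<bar>c\<bar> * B)"
        by (intro P(6)) (auto simp: abs_mult intro: mult_left_mono B)
      finally show "norm (\<psi> (c * g x)) \<le> \<psi> (\<bar>c\<bar> * B)" using P(1)[of "c * g x"] by simp
    qed
  qed fact
qed

lemma qnorm_eq:
  assumes psi: "W_minus \<psi>" and fm: "finite_measure M" and g: "g \<in> borel_measurable M"
    and B: "\<And>y. \<bar>g y\<bar> \<le> B"
  shows "weak_qnorm \<psi> M g = Inf {ereal N | N. N > 0 \<and> (\<integral>y. \<psi> ((1/N) * g y) \<partial>M) \<le> 1}"
proof -
  have "(\<integral>\<^sup>+ y. ennreal (\<psi> (g y / N)) \<partial>M) \<le> 1 \<longleftrightarrow> (\<integral>y. \<psi> ((1/N) * g y) \<partial>M) \<le> 1" for N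
  proof -
    have "(\<integral>\<^sup>+ y. ennreal (\<psi> (g y / N)) \<partial>M) = (\<integral>\<^sup>+ y. ennreal (\<psi> ((1/N) * g y)) \<partial>M)"
      by simp
    also have "\<dots> = ennreal (\<integral>y. \<psi> ((1/N) * g y) \<partial>M)"
      using psi_integrable[OF psi fm g B, of "1/N"] psi_props(1)[OF psi]
      by (intro nn_integral_eq_integral) (auto simp del: times_divide_eq_left)
    finally show ?thesis by (simp add: ennreal_le_1)
  qed
  then show ?thesis unfolding weak_qnorm_def by simp
qed

lemma psi_anti:
  assumes psi: "W_minus \<psi>" and fm: "finite_measure M" and g: "g \<in> borel_measurable M"
    and B: "\<And>y. \<bar>g y\<bar> \<le> B" and MN: "0 < a" "a \<le> b"
  shows "(\<integral>y. \<psi> ((1/b) * g y) \<partial>M) \<le> (\<integral>y. \<psi> ((1/a) * g y) \<partial>M)"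
proof (rule integral_mono)
  note P = psi_props[OF psi]
  show "integrable M (\<lambda>y. \<psi> ((1/b) * g y))" "integrable M (\<lambda>y. \<psi> ((1/a) * g y))"
    using psi_integrable[OF psi fm g B] by blast+
  fix y
  have "\<psi> ((1/b) * g y) = \<psi> (\<bar>g y\<bar> / b)" using P(2)[of "(1/b) * g y"] MN by (simp add: abs_mult)
  also have "\<dots> \<le> \<psi> (\<bar>g y\<bar> / a)" using MN
    by (intro P(6)) (auto intro: divide_left_mono)
  also have "\<dots> = \<psi> ((1/a) * g y)" using P(2)[of "(1/a) * g y"] MN by (simp add: abs_mult)
  finally show "\<psi> ((1/b) * g y) \<le> \<psi> ((1/a) * g y)" .
qed

lemma psi_strict:
  assumes psi: "W_minus \<psi>" and fm: "finite_measure M" and g: "g \<in> borel_measurable M"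
    and B: "\<And>y. \<bar>g y\<bar> \<le> B" and MN: "0 < a" "a < b"
    and le: "(\<integral>y. \<psi> ((1/a) * g y) \<partial>M) \<le> 1"
  shows "(\<integral>y. \<psi> ((1/b) * g y) \<partial>M) < 1"
proof -
  interpret finite_measure M by fact
  note P = psi_props[OF psi]
  let ?A = "{y \<in> space M. g y \<noteq> 0}"
  have Asets: "?A \<in> sets M" using g by measurable
  show ?thesis
  proof (cases "emeasure M ?A = 0")
    case True
    have "AE y in M. y \<notin> ?A" using True Asets by (intro AE_I[of _ _ ?A]) auto
    then have "AE y in M. g y = 0" by (auto elim!: AE_mp intro!: AE_I2)
    then have "AE y in M. \<psi> ((1/b) * g y) = 0"
      by eventually_elim (simp add: P(4))
    then have "(\<integral>y. \<psi> ((1/b) * g y) \<partial>M) = (\<integral>y. 0 \<partial>M)"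
      using borel_measurable_integrable[OF psi_integrable[OF psi fm g B, of "1/b"]]
      by (intro integral_cong_AE) auto
    then show ?thesis by simp
  next
    case False
    have "(\<integral>y. \<psi> ((1/b) * g y) \<partial>M) < (\<integral>y. \<psi> ((1/a) * g y) \<partial>M)"
    proof (rule integral_less_AE[OF _ _ False Asets])
      show "integrable M (\<lambda>y. \<psi> ((1/b) * g y))" "integrable M (\<lambda>y. \<psi> ((1/a) * g y))"
        using psi_integrable[OF psi fm g B] by blast+
      have lt: "\<psi> ((1/b) * g y) < \<psi> ((1/a) * g y)" if "g y \<noteq> 0" for y
      proof -
        have "\<psi> ((1/b) * g y) = \<psi> (\<bar>g y\<bar> / b)" using P(2)[of "(1/b) * g y"] MN by (simp add: abs_mult)
        also have "\<dots> < \<psi> (\<bar>g y\<bar> / a)" using MN that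
          by (intro P(5)) (auto intro: divide_strict_left_mono)
        also have "\<dots> = \<psi> ((1/a) * g y)" using P(2)[of "(1/a) * g y"] MN by (simp add: abs_mult)
        finally show ?thesis .
      qed
      show "AE x in M. x \<in> ?A \<longrightarrow> \<psi> ((1/b) * g x) \<noteq> \<psi> ((1/a) * g x)"
        using lt by (auto intro!: AE_I2 dest: less_imp_neq)
      show "AE x in M. \<psi> ((1/b) * g x) \<le> \<psi> ((1/a) * g x)"
        using lt by (intro AE_I2) (metis P(4) less_imp_le mult_zero_right order_refl)
    qed
    then show ?thesis using le by simp
  qed
qed

theorem lemma2p7:
  fixes \<psi> :: "real \<Rightarrow> real"
    and \<mu>k :: "nat \<Rightarrow> 'a measure" and \<mu> :: "'a measure"
    and fk :: "nat \<Rightarrow> 'a \<Rightarrow> real" and f :: "'a \<Rightarrow> real"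
  assumes psi: "W_minus \<psi>"
    and sets_eq: "\<And>k. sets (\<mu>k k) = sets \<mu>"
    and fin_k: "\<And>k. finite_measure (\<mu>k k)"
    and fin: "finite_measure \<mu>"
    and meas_k: "\<And>k. fk k \<in> borel_measurable (\<mu>k k)"
    and meas: "f \<in> borel_measurable \<mu>"
    and bdd_k: "\<And>k. bounded (range (fk k))"
    and bdd: "bounded (range f)"
    and conv: "\<And>c::real. c \<ge> 0 \<Longrightarrow>
       (\<lambda>k. \<integral>y. \<psi> (c * fk k y) \<partial>(\<mu>k k)) \<longlonglongrightarrow> (\<integral>y. \<psi> (c * f y) \<partial>\<mu>)"
  shows "(\<lambda>k. weak_qnorm \<psi> (\<mu>k k) (fk k)) \<longlonglongrightarrow> weak_qnorm \<psi> \<mu> f"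
proof -
  obtain B where B: "\<And>y. \<bar>f y\<bar> \<le> B" using bdd unfolding bounded_real by auto
  have "\<exists>B. \<forall>y. \<bar>fk k y\<bar> \<le> B" for k using bdd_k[of k] unfolding bounded_real by auto
  then obtain Bk where Bk: "\<And>k y. \<bar>fk k y\<bar> \<le> Bk k" by metis
  have eq1: "weak_qnorm \<psi> \<mu> f = Inf {ereal N | N. N > 0 \<and> (\<integral>y. \<psi> ((1/N) * f y) \<partial>\<mu>) \<le> 1}"
    by (rule qnorm_eq[OF psi fin meas B])
  have eq2: "weak_qnorm \<psi> (\<mu>k k) (fk k) = Inf {ereal N | N. N > 0 \<and> (\<integral>y. \<psi> ((1/N) * fk k y) \<partial>\<mu>k k) \<le> 1}" for k
    by (rule qnorm_eq[OF psi fin_k meas_k Bk])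
  show ?thesis unfolding eq1 eq2
  proof (rule abstract_conv)
    fix N :: real assume "N > 0"
    then show "(\<lambda>k. \<integral>y. \<psi> ((1/N) * fk k y) \<partial>\<mu>k k) \<longlonglongrightarrow> (\<integral>y. \<psi> ((1/N) * f y) \<partial>\<mu>)"
      by (intro conv) simp
  next
    fix k and a b :: real assume "0 < a" "a \<le> b"
    then show "(\<integral>y. \<psi> ((1/b) * fk k y) \<partial>\<mu>k k) \<le> (\<integral>y. \<psi> ((1/a) * fk k y) \<partial>\<mu>k k)"
      by (rule psi_anti[OF psi fin_k meas_k Bk])
  next
    fix a b :: real assume "0 < a" "a < b" "(\<integral>y. \<psi> ((1/a) * f y) \<partial>\<mu>) \<le> 1"
    then show "(\<integral>y. \<psi> ((1/b) * f y) \<partial>\<mu>) < 1"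
      by (rule psi_strict[OF psi fin meas B])
  qed
qed

end
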